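(* For every $k\ge1$, the homomorphisms $\varphi_k\colon G_{k-1}\to\mathbb{Z}$ and $\psi_k\colon H_{k-1}\to\mathbb{Z}$ defined below are invariant under conjugation by $\mathbb{F}_2$: $\varphi_k(hgh^{-1})=\varphi_k(g)$ for all $g\in G_{k-1}$, $h\in\mathbb{F}_2$, and $\psi_k(hgh^{-1})=\psi_k(g)$ for all $g\in H_{k-1}$, $h\in\mathbb{F}_2$ (in particular $G_{k-1}$ and $H_{k-1}$ are normal in $\mathbb{F}_2$).
   Context: $\mathbb{F}_2$ is the free group on $x,y$. Let $\tilde K$ be the graph with vertex set $\mathbb{Z}^2$ and oriented edges $x^iy^jX$ from $(i,j)$ to $(i+1,j)$ and $x^iy^jY$ from $(i,j)$ to $(i,j+1)$. A $1$-chain is written $\alpha=P_\alpha(x,y)X+Q_\alpha(x,y)Y$ with $P_\alpha,Q_\alpha$ integer Laurent polynomials (coefficient of $x^iy^j$ in $P_\alpha$ = coefficient of edge $x^iy^jX$, similarly for $Q_\alpha$). For $g\in[\mathbb{F}_2,\mathbb{F}_2]$ written as a word in $x^{\pm1},y^{\pm1}$, the cycle $\alpha_g$ is the $1$-cycle traced by the lattice path from $(0,0)$ in which $x,x^{-1},y,y^{-1}$ move by $(1,0),(-1,0),(0,1),(0,-1)$ along the corresponding edges, each edge counted with sign $+1$ if traversed in its orientation and $-1$ otherwise; its homology class depends only on $g$. Put $f_g(y)=P_{\alpha_g}(1,y)$ and $g_g(x)=Q_{\alpha_g}(x,1)$. Set $G_0=H_0=[\mathbb{F}_2,\mathbb{F}_2]$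 and inductively, for $k\ge1$, $\varphi_k(g)=f_g^{(k)}(1)/k!$ for $g\in G_{k-1}$, $\psi_k(g)=g_g^{(k)}(1)/k!$ for $g\in H_{k-1}$ (integers, since the $k$th derivative of an integer Laurent polynomial is divisible by $k!$), $G_k=\ker\varphi_k$, $H_k=\ker\psi_k$. These $\varphi_k,\psi_k$ are group homomorphisms to $\mathbb{Z}$. *)

theory Defs
  imports "HOL-Analysis.Analysis"
begin

text \<open>Elements of the free group F2 on x, y are represented by words in
x, x^-1, y, y^-1. A letter is a generator together with a flag that is True
for the inverse letter.\<close>

datatype gen = Gx | Gy

type_synonym letter = "gen \<times> bool"
type_synonym word = "letter list"

definition flip :: "letter \<Rightarrow> letter" where
  "flip l = (fst l, \<not> snd l)"

definition winv :: "word \<Rightarrow> word" where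
  "winv w = rev (map flip w)"

definition wconj :: "word \<Rightarrow> word \<Rightarrow> word" where
  "wconj h g = h @ g @ winv h"

text \<open>Words representing elements of the commutator subgroup [F2,F2]:
the subgroup generated by commutators, closed under free reduction/insertion
of cancelling pairs (i.e. a union of classes of the free group).\<close>
inductive_set comm_words :: "word set" where
  empty: "[] \<in> comm_words"
| commutator: "u @ v @ winv u @ winv v \<in> comm_words"
| mult: "u \<in> comm_words \<Longrightarrow> v \<in> comm_words \<Longrightarrow> u @ v \<in> comm_words"
| inv: "u \<in> comm_words \<Longrightarrow> winv u \<in> comm_words"
| reduce: "a @ [l, flip l] @ b \<in> comm_words \<Longrightarrow> a @ b \<in> comm_words"
| expand: "a @ b \<in> comm_words \<Longrightarrow> a @ [l, flip l] @ b \<in> comm_words"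

fun step :: "letter \<Rightarrow> int \<times> int \<Rightarrow> int \<times> int" where
  "step (Gx, False) (i, j) = (i + 1, j)"
| "step (Gx, True) (i, j) = (i - 1, j)"
| "step (Gy, False) (i, j) = (i, j + 1)"
| "step (Gy, True) (i, j) = (i, j - 1)"

text \<open>Edges are (g, i, j): the edge x^i y^j X (g = Gx) from (i,j) to (i+1,j)
or x^i y^j Y (g = Gy) from (i,j) to (i,j+1). The edge traversed by a letter
from position p, and the sign of the traversal.\<close>
fun trav_edge :: "letter \<Rightarrow> int \<times> int \<Rightarrow> gen \<times> int \<times> int" where
  "trav_edge (Gx, False) (i, j) = (Gx, i, j)"
| "trav_edge (Gx, True) (i, j) = (Gx, i - 1, j)"
| "trav_edge (Gy, False) (i, j) = (Gy, i, j)"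
| "trav_edge (Gy, True) (i, j) = (Gy, i, j - 1)"

definition sign_of :: "letter \<Rightarrow> int" where
  "sign_of l = (if snd l then -1 else 1)"

fun chain_from :: "word \<Rightarrow> int \<times> int \<Rightarrow> gen \<times> int \<times> int \<Rightarrow> int" where
  "chain_from [] p = (\<lambda>e. 0)"
| "chain_from (l # w) p =
     (\<lambda>e. (if e = trav_edge l p then sign_of l else 0) + chain_from w (step l p) e)"

fun edges_from :: "word \<Rightarrow> int \<times> int \<Rightarrow> (gen \<times> int \<times> int) set" where
  "edges_from [] p = {}"
| "edges_from (l # w) p = insert (trav_edge l p) (edges_from w (step l p))"

definition alpha :: "word \<Rightarrow> gen \<times> int \<times> int \<Rightarrow> int" where
  "alpha w = chain_from w (0, 0)"

definition P_coeff :: "word \<Rightarrow> int \<Rightarrow> int \<Rightarrow> int" where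
  "P_coeff w i j = alpha w (Gx, i, j)"

definition Q_coeff :: "word \<Rightarrow> int \<Rightarrow> int \<Rightarrow> int" where
  "Q_coeff w i j = alpha w (Gy, i, j)"

text \<open>f_g(y) = P(1,y) = sum of P(i,j) y^j and g_g(x) = Q(x,1) = sum of Q(i,j) x^i,
as real functions (sums over the finite support of the chain).\<close>
definition f_poly :: "word \<Rightarrow> real \<Rightarrow> real" where
  "f_poly w y = (\<Sum>(i, j) \<in> {(i, j). (Gx, i, j) \<in> edges_from w (0, 0)}.
                   of_int (P_coeff w i j) * y powi j)"

definition g_poly :: "word \<Rightarrow> real \<Rightarrow> real" where
  "g_poly w x = (\<Sum>(i, j) \<in> {(i, j). (Gy, i, j) \<in> edges_from w (0, 0)}.
                   of_int (Q_coeff w i j) * x powi i)"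

definition phi :: "nat \<Rightarrow> word \<Rightarrow> real" where
  "phi k w = (deriv ^^ k) (f_poly w) 1 / fact k"

definition psi :: "nat \<Rightarrow> word \<Rightarrow> real" where
  "psi k w = (deriv ^^ k) (g_poly w) 1 / fact k"

fun G_set :: "nat \<Rightarrow> word set" where
  "G_set 0 = comm_words"
| "G_set (Suc k) = {w \<in> G_set k. phi (Suc k) w = 0}"

fun H_set :: "nat \<Rightarrow> word set" where
  "H_set 0 = comm_words"
| "H_set (Suc k) = {w \<in> H_set k. psi (Suc k) w = 0}"

end

theory Submission
  imports Defs "HOL-Computational_Algebra.Formal_Power_Series"
begin


fun pend :: "word \<Rightarrow> int \<times> int \<Rightarrow> int \<times> int" where
  "pend [] p = p"
| "pend (l # w) p = pend w (step l p)"

definition dxl :: "letter \<Rightarrow> int" where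
  "dxl l = (if fst l = Gx then sign_of l else 0)"
definition dyl :: "letter \<Rightarrow> int" where
  "dyl l = (if fst l = Gy then sign_of l else 0)"

definition dxw :: "word \<Rightarrow> int" where "dxw w = sum_list (map dxl w)"
definition dyw :: "word \<Rightarrow> int" where "dyw w = sum_list (map dyl w)"

lemma step_eq: "step l p = (fst p + dxl l, snd p + dyl l)"
  by (cases l; cases p; cases "fst l"; cases "snd l") (auto simp: dxl_def dyl_def sign_of_def)

lemma pend_eq: "pend w p = (fst p + dxw w, snd p + dyw w)"
  by (induction w arbitrary: p) (auto simp: dxw_def dyw_def step_eq)

lemma pend_append: "pend (u @ v) p = pend v (pend u p)"
  by (induction u arbitrary: p) auto

lemma dxl_flip[simp]: "dxl (flip l) = - dxl l" and dyl_flip[simp]: "dyl (flip l) = - dyl l"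
  by (auto simp: dxl_def dyl_def flip_def sign_of_def)

lemma winv_cons: "winv (l # h) = winv h @ [flip l]"
  by (simp add: winv_def)

lemma dxw_simps[simp]: "dxw [] = 0" "dxw (l # w) = dxl l + dxw w" "dxw (u @ v) = dxw u + dxw v"
  by (auto simp: dxw_def)
lemma dxw_winv[simp]: "dxw (winv u) = - dxw u"
  by (induction u) (auto simp: winv_cons, simp add: winv_def)
lemma dyw_simps[simp]: "dyw [] = 0" "dyw (l # w) = dyl l + dyw w" "dyw (u @ v) = dyw u + dyw v"
  by (auto simp: dyw_def)
lemma dyw_winv[simp]: "dyw (winv u) = - dyw u"
  by (induction u) (auto simp: winv_cons, simp add: winv_def)

lemma comm_closed: "g \<in> comm_words \<Longrightarrow> dxw g = 0 \<and> dyw g = 0"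
  by (induction rule: comm_words.induct) auto

lemma flip_flip[simp]: "flip (flip l) = l" by (simp add: flip_def)

lemma cancel_inv: "a @ winv g @ g @ b \<in> comm_words \<Longrightarrow> a @ b \<in> comm_words"
proof (induction g arbitrary: b)
  case Nil then show ?case by (simp add: winv_def)
next
  case (Cons l g)
  have "(a @ winv g) @ [flip l, flip (flip l)] @ (g @ b) \<in> comm_words"
    using Cons.prems by (simp add: winv_cons)
  then have "(a @ winv g) @ (g @ b) \<in> comm_words" by (rule comm_words.reduce)
  then show ?case using Cons.IH by simp
qed

lemma conj_comm: "g \<in> comm_words \<Longrightarrow> wconj h g \<in> comm_words"
proof -
  assume g: "g \<in> comm_words"
  have "(h @ g @ winv h @ winv g) @ g \<in> comm_words"
    by (intro comm_words.mult comm_words.commutator g)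
  then have "(h @ g @ winv h) @ winv g @ g @ [] \<in> comm_words" by simp
  then have "(h @ g @ winv h) @ [] \<in> comm_words" by (rule cancel_inv)
  then show ?thesis by (simp add: wconj_def)
qed

lemma chain_append: "chain_from (u @ v) p e = chain_from u p e + chain_from v (pend u p) e"
  by (induction u arbitrary: p) auto

lemma pend_winv: "pend (winv h) (pend h p) = p"
  by (simp add: pend_eq)

lemma chain_winv: "chain_from (winv h) (pend h p) e = - chain_from h p e"
proof (induction h arbitrary: p)
  case Nil then show ?case by (simp add: winv_def)
next
  case (Cons l h)
  have t: "trav_edge (flip l) (step l p) = trav_edge l p" "sign_of (flip l) = - sign_of l"
    by (cases l; cases p; cases "fst l"; cases "snd l"; auto simp: flip_def sign_of_def)+
  have "chain_from (winv (l # h)) (pend (l # h) p) e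
     = chain_from (winv h) (pend h (step l p)) e + chain_from [flip l] (step l p) e"
    by (simp add: winv_cons chain_append pend_winv del: chain_from.simps(2))
  also have "\<dots> = - chain_from (l # h) p e"
    using Cons.IH t by auto
  finally show ?case .
qed

definition eshift :: "int \<Rightarrow> int \<Rightarrow> gen \<times> int \<times> int \<Rightarrow> gen \<times> int \<times> int" where
  "eshift a b e = (fst e, fst (snd e) + a, snd (snd e) + b)"

lemma eshift_inj: "eshift a b e = eshift a b e' \<longleftrightarrow> e = e'"
  by (cases e; cases e'; auto simp: eshift_def)

lemma trav_shift: "trav_edge l (fst p + a, snd p + b) = eshift a b (trav_edge l p)"
  by (cases l; cases p; cases "fst l"; cases "snd l"; auto simp: eshift_def)

lemma step_shift: "step l (fst p + a, snd p + b) = (fst (step l p) + a, snd (step l p) + b)"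
  by (simp add: step_eq)

lemma chain_shift: "chain_from w (fst p + a, snd p + b) (eshift a b e) = chain_from w p e"
proof (induction w arbitrary: p)
  case Nil then show ?case by simp
next
  case (Cons l w)
  show ?case using Cons.IH[of "step l p"]
    by (simp add: trav_shift step_shift eshift_inj)
qed

lemma alpha_conj:
  assumes "g \<in> comm_words"
  shows "alpha (wconj h g) (eshift (dxw h) (dyw h) e) = alpha g e"
proof -
  have c: "dxw g = 0" "dyw g = 0" using comm_closed[OF assms] by auto
  have pg: "pend g q = q" for q using c by (simp add: pend_eq)
  have "alpha (wconj h g) e' = chain_from g (pend h (0,0)) e'" for e'
    unfolding alpha_def wconj_def
    by (simp add: chain_append pg chain_winv)
  moreover have "pend h (0,0) = (fst (0::int,0::int) + dxw h, snd (0::int,0::int) + dyw h)"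
    by (simp add: pend_eq)
  ultimately show ?thesis using chain_shift[of g "(0,0)" "dxw h" "dyw h" e]
    by (simp add: alpha_def)
qed

lemma chain_supp: "chain_from w p e \<noteq> 0 \<Longrightarrow> e \<in> edges_from w p"
  by (induction w arbitrary: p) (auto split: if_splits)

lemma edges_finite: "finite (edges_from w p)"
  by (induction w arbitrary: p) auto

lemma alpha_supp: "alpha w e \<noteq> 0 \<Longrightarrow> e \<in> edges_from w (0,0)"
  unfolding alpha_def by (rule chain_supp)

lemma chain_sum_x:
  assumes "finite T" "edges_from w p \<subseteq> T"
  shows "(\<Sum>e\<in>T. if fst e = Gx then chain_from w p e else 0) = dxw w"
  using assms(2)
proof (induction w arbitrary: p)
  case Nil then show ?case by (simp only: chain_from.simps) simp
next
  case (Cons l w)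
  have "(\<Sum>e\<in>T. if fst e = Gx then chain_from (l#w) p e else 0)
     = (\<Sum>e\<in>T. if fst e = Gx \<and> e = trav_edge l p then sign_of l else 0)
       + (\<Sum>e\<in>T. if fst e = Gx then chain_from w (step l p) e else 0)"
    by (subst sum.distrib[symmetric], rule sum.cong, auto)
  also have "(\<Sum>e\<in>T. if fst e = Gx \<and> e = trav_edge l p then sign_of l else 0)
     = (if fst (trav_edge l p) = Gx then sign_of l else 0)"
    using Cons.prems assms(1)
    by (subst sum.cong[OF refl, where h="\<lambda>e. if e = trav_edge l p then (if fst (trav_edge l p) = Gx then sign_of l else 0) else 0"]) (auto simp: sum.delta')
  also have "\<dots> = dxl l"
    by (cases l; cases p; cases "fst l"; cases "snd l"; auto simp: dxl_def)
  finally show ?case using Cons by simp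
qed

lemma chain_sum_y:
  assumes "finite T" "edges_from w p \<subseteq> T"
  shows "(\<Sum>e\<in>T. if fst e = Gy then chain_from w p e else 0) = dyw w"
  using assms(2)
proof (induction w arbitrary: p)
  case Nil then show ?case by (simp only: chain_from.simps) simp
next
  case (Cons l w)
  have "(\<Sum>e\<in>T. if fst e = Gy then chain_from (l#w) p e else 0)
     = (\<Sum>e\<in>T. if fst e = Gy \<and> e = trav_edge l p then sign_of l else 0)
       + (\<Sum>e\<in>T. if fst e = Gy then chain_from w (step l p) e else 0)"
    by (subst sum.distrib[symmetric], rule sum.cong, auto)
  also have "(\<Sum>e\<in>T. if fst e = Gy \<and> e = trav_edge l p then sign_of l else 0)
     = (if fst (trav_edge l p) = Gy then sign_of l else 0)"
    using Cons.prems assms(1)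
    by (subst sum.cong[OF refl, where h="\<lambda>e. if e = trav_edge l p then (if fst (trav_edge l p) = Gy then sign_of l else 0) else 0"]) (auto simp: sum.delta')
  also have "\<dots> = dyl l"
    by (cases l; cases p; cases "fst l"; cases "snd l"; auto simp: dyl_def)
  finally show ?case using Cons by simp
qed



lemma alpha_zero: "e \<notin> edges_from w (0,0) \<Longrightarrow> alpha w e = 0"
  using alpha_supp by blast

lemma higher_deriv_laurent:
  fixes c :: "'a \<Rightarrow> real" and d :: "'a \<Rightarrow> int"
  assumes "finite I" "y > 0"
  shows "(deriv ^^ k) (\<lambda>y. \<Sum>x\<in>I. c x * y powi d x) y
       = (\<Sum>x\<in>I. c x * (\<Prod>i<k. of_int (d x) - of_nat i) * y powi (d x - int k))"
  using assms(2)
proof (induction k arbitrary: y)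
  case 0 then show ?case by simp
next
  case (Suc k)
  define H where "H = (\<lambda>y::real. \<Sum>x\<in>I. c x * (\<Prod>i<k. of_int (d x) - of_nat i) * y powi (d x - int k))"
  have ev: "eventually (\<lambda>z. (deriv ^^ k) (\<lambda>y. \<Sum>x\<in>I. c x * y powi d x) z = H z) (nhds y)"
  proof -
    have "eventually (\<lambda>z. z \<in> {0<..}) (nhds y)"
      using Suc.prems by (intro eventually_nhds_in_open) auto
    then show ?thesis by eventually_elim (use Suc.IH in \<open>auto simp: H_def\<close>)
  qed
  have "(deriv ^^ Suc k) (\<lambda>y. \<Sum>x\<in>I. c x * y powi d x) y = deriv H y"
    using deriv_cong_ev[OF ev refl] by simp
  also have "\<dots> = (\<Sum>x\<in>I. c x * (\<Prod>i<k. of_int (d x) - of_nat i) * (of_int (d x - int k) * y powi (d x - int k - 1)))"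
    unfolding H_def
    apply (rule DERIV_imp_deriv)
    using Suc.prems apply (auto intro!: derivative_eq_intros)
    apply (intro sum.cong refl)
    by (simp add: mult_ac)
  also have "\<dots> = (\<Sum>x\<in>I. c x * (\<Prod>i<Suc k. of_int (d x) - of_nat i) * y powi (d x - int (Suc k)))"
    by (intro sum.cong refl) (simp add: algebra_simps)
  finally show ?case .
qed


definition xterm :: "nat \<Rightarrow> (gen \<times> int \<times> int \<Rightarrow> int) \<Rightarrow> gen \<times> int \<times> int \<Rightarrow> real" where
  "xterm k A e = (if fst e = Gx then of_int (A e) * (of_int (snd (snd e)) gchoose k) else 0)"
definition yterm :: "nat \<Rightarrow> (gen \<times> int \<times> int \<Rightarrow> int) \<Rightarrow> gen \<times> int \<times> int \<Rightarrow> real" where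
  "yterm k A e = (if fst e = Gy then of_int (A e) * (of_int (fst (snd e)) gchoose k) else 0)"

lemma prod_gchoose: "(\<Prod>i<k. (a::real) - of_nat i) / fact k = a gchoose k"
  by (simp add: gbinomial_prod_rev atLeast0LessThan)

lemma phi_pairs:
  "phi k w = (\<Sum>(i, j) \<in> {(i, j). (Gx, i, j) \<in> edges_from w (0, 0)}. of_int (P_coeff w i j) * (of_int j gchoose k))"
proof -
  define S where "S = {(i, j). (Gx, i, j) \<in> edges_from w (0, 0)}"
  have fin: "finite S"
  proof -
    have "S \<subseteq> (\<lambda>e. (fst (snd e), snd (snd e))) ` edges_from w (0,0)"
      unfolding S_def by force
    then show ?thesis using finite_surj edges_finite by blast
  qed
  have fp: "f_poly w = (\<lambda>y. \<Sum>x\<in>S. (\<lambda>x. of_int (P_coeff w (fst x) (snd x))) x * y powi (snd x))"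
    unfolding f_poly_def S_def by (intro ext sum.cong refl) auto
  have "phi k w = (\<Sum>x\<in>S. of_int (P_coeff w (fst x) (snd x)) * (\<Prod>i<k. of_int (snd x) - of_nat i) * 1 powi (snd x - int k)) / fact k"
    unfolding phi_def fp by (subst higher_deriv_laurent[OF fin]) auto
  also have "\<dots> = (\<Sum>x\<in>S. of_int (P_coeff w (fst x) (snd x)) * (of_int (snd x) gchoose k))"
    by (simp add: sum_divide_distrib prod_gchoose[symmetric])
  finally show ?thesis unfolding S_def by (simp add: case_prod_unfold)
qed

lemma psi_pairs:
  "psi k w = (\<Sum>(i, j) \<in> {(i, j). (Gy, i, j) \<in> edges_from w (0, 0)}. of_int (Q_coeff w i j) * (of_int i gchoose k))"
proof -
  define S where "S = {(i, j). (Gy, i, j) \<in> edges_from w (0, 0)}"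
  have fin: "finite S"
  proof -
    have "S \<subseteq> (\<lambda>e. (fst (snd e), snd (snd e))) ` edges_from w (0,0)"
      unfolding S_def by force
    then show ?thesis using finite_surj edges_finite by blast
  qed
  have fp: "g_poly w = (\<lambda>y. \<Sum>x\<in>S. (\<lambda>x. of_int (Q_coeff w (fst x) (snd x))) x * y powi (fst x))"
    unfolding g_poly_def S_def by (intro ext sum.cong refl) auto
  have "psi k w = (\<Sum>x\<in>S. of_int (Q_coeff w (fst x) (snd x)) * (\<Prod>i<k. of_int (fst x) - of_nat i) * 1 powi (fst x - int k)) / fact k"
    unfolding psi_def fp by (subst higher_deriv_laurent[OF fin]) auto
  also have "\<dots> = (\<Sum>x\<in>S. of_int (Q_coeff w (fst x) (snd x)) * (of_int (fst x) gchoose k))"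
    by (simp add: sum_divide_distrib prod_gchoose[symmetric])
  finally show ?thesis unfolding S_def by (simp add: case_prod_unfold)
qed

lemma phi_edges: "phi k w = (\<Sum>e\<in>edges_from w (0,0). xterm k (alpha w) e)"
proof -
  let ?E = "edges_from w (0,0)"
  have "(\<Sum>e\<in>?E. xterm k (alpha w) e) = (\<Sum>e\<in>{e\<in>?E. fst e = Gx}. of_int (alpha w e) * (of_int (snd (snd e)) gchoose k))"
    unfolding xterm_def by (simp add: sum.inter_filter edges_finite)
  also have "{e\<in>?E. fst e = Gx} = (\<lambda>(i,j). (Gx,i,j)) ` {(i, j). (Gx, i, j) \<in> ?E}"
    by force
  also have "(\<Sum>e\<in>\<dots>. of_int (alpha w e) * (of_int (snd (snd e)) gchoose k))
     = (\<Sum>(i, j) \<in> {(i, j). (Gx, i, j) \<in> ?E}. of_int (P_coeff w i j) * (of_int j gchoose k))"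
    by (subst sum.reindex) (auto simp: inj_on_def P_coeff_def case_prod_unfold)
  finally show ?thesis by (simp add: phi_pairs)
qed

lemma psi_edges: "psi k w = (\<Sum>e\<in>edges_from w (0,0). yterm k (alpha w) e)"
proof -
  let ?E = "edges_from w (0,0)"
  have "(\<Sum>e\<in>?E. yterm k (alpha w) e) = (\<Sum>e\<in>{e\<in>?E. fst e = Gy}. of_int (alpha w e) * (of_int (fst (snd e)) gchoose k))"
    unfolding yterm_def by (simp add: sum.inter_filter edges_finite)
  also have "{e\<in>?E. fst e = Gy} = (\<lambda>(i,j). (Gy,i,j)) ` {(i, j). (Gy, i, j) \<in> ?E}"
    by force
  also have "(\<Sum>e\<in>\<dots>. of_int (alpha w e) * (of_int (fst (snd e)) gchoose k))
     = (\<Sum>(i, j) \<in> {(i, j). (Gy, i, j) \<in> ?E}. of_int (Q_coeff w i j) * (of_int i gchoose k))"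
    by (subst sum.reindex) (auto simp: inj_on_def Q_coeff_def case_prod_unfold)
  finally show ?thesis by (simp add: psi_pairs)
qed

lemma phi_T:
  assumes "finite T" "\<And>e. alpha w e \<noteq> 0 \<Longrightarrow> e \<in> T"
  shows "phi k w = (\<Sum>e\<in>T. xterm k (alpha w) e)"
proof -
  let ?E = "edges_from w (0,0)"
  have "phi k w = (\<Sum>e\<in>?E \<union> T. xterm k (alpha w) e)"
    unfolding phi_edges
    by (rule sum.mono_neutral_left) (use assms edges_finite in \<open>auto simp: xterm_def alpha_zero\<close>)
  also have "\<dots> = (\<Sum>e\<in>T. xterm k (alpha w) e)"
    by (rule sum.mono_neutral_right) (use assms edges_finite in \<open>auto simp: xterm_def alpha_zero\<close>)
  finally show ?thesis .
qed

lemma psi_T: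
  assumes "finite T" "\<And>e. alpha w e \<noteq> 0 \<Longrightarrow> e \<in> T"
  shows "psi k w = (\<Sum>e\<in>T. yterm k (alpha w) e)"
proof -
  let ?E = "edges_from w (0,0)"
  have "psi k w = (\<Sum>e\<in>?E \<union> T. yterm k (alpha w) e)"
    unfolding psi_edges
    by (rule sum.mono_neutral_left) (use assms edges_finite in \<open>auto simp: yterm_def alpha_zero\<close>)
  also have "\<dots> = (\<Sum>e\<in>T. yterm k (alpha w) e)"
    by (rule sum.mono_neutral_right) (use assms edges_finite in \<open>auto simp: yterm_def alpha_zero\<close>)
  finally show ?thesis .
qed



lemma eshift_comp[simp]: "fst (eshift a b e) = fst e" "fst (snd (eshift a b e)) = fst (snd e) + a"
  "snd (snd (eshift a b e)) = snd (snd e) + b"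
  by (simp_all add: eshift_def)

lemma phi_conj:
  assumes g: "g \<in> comm_words" and z: "\<forall>m. 1 \<le> m \<and> m < k \<longrightarrow> phi m g = 0"
  shows "phi k (wconj h g) = phi k g"
proof -
  define a where "a = dxw h"
  define b where "b = dyw h"
  let ?E = "edges_from g (0,0)"
  have sh: "alpha (wconj h g) (eshift a b e) = alpha g e" for e
    using alpha_conj[OF g] a_def b_def by simp
  have inv: "eshift a b (eshift (-a) (-b) e) = e" for e by (cases e) (simp add: eshift_def)
  have supp: "e \<in> eshift a b ` ?E" if "alpha (wconj h g) e \<noteq> 0" for e
  proof -
    have "alpha g (eshift (-a) (-b) e) \<noteq> 0" using that sh[of "eshift (-a) (-b) e"] inv by simp
    then have "eshift (-a) (-b) e \<in> ?E" by (rule alpha_supp)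
    then show ?thesis using inv[of e] by (metis image_eqI)
  qed
  have injs: "inj_on (eshift a b) ?E" by (auto simp: inj_on_def eshift_inj)
  have "phi k (wconj h g) = (\<Sum>e\<in>eshift a b ` ?E. xterm k (alpha (wconj h g)) e)"
    by (rule phi_T) (use edges_finite supp in auto)
  also have "\<dots> = (\<Sum>e\<in>?E. xterm k (alpha (wconj h g)) (eshift a b e))"
    by (simp add: sum.reindex[OF injs])
  also have "\<dots> = (\<Sum>e\<in>?E. \<Sum>m\<in>{0..k}. xterm m (alpha g) e * (of_int b gchoose (k - m)))"
  proof (intro sum.cong refl)
    fix e
    show "xterm k (alpha (wconj h g)) (eshift a b e) = (\<Sum>m\<in>{0..k}. xterm m (alpha g) e * (of_int b gchoose (k - m)))"
      using gbinomial_Vandermonde[of "of_int (snd (snd e)) :: real" "of_int b" k]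
      by (simp add: xterm_def sh mult.assoc flip: sum_distrib_left)
  qed
  also have "\<dots> = (\<Sum>m\<in>{0..k}. phi m g * (of_int b gchoose (k - m)))"
    by (subst sum.swap) (simp add: phi_edges sum_distrib_right)
  also have "\<dots> = phi k g"
  proof -
    have zero: "phi m g = 0" if "m < k" for m
    proof (cases "m = 0")
      case True
      have "phi 0 g = (\<Sum>e\<in>?E. of_int (if fst e = Gx then chain_from g (0,0) e else 0))"
        unfolding phi_edges True by (intro sum.cong refl) (simp add: xterm_def alpha_def)
      also have "\<dots> = of_int (dxw g)"
        by (subst of_int_sum[symmetric], subst chain_sum_x) (auto simp: edges_finite)
      also have "\<dots> = 0" using comm_closed[OF g] by simp
      finally show ?thesis using True by simp
    next
      case False
      then show ?thesis using z that by auto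
    qed
    have "{0..k} = insert k {0..<k}" by auto
    then show ?thesis using zero by simp
  qed
  finally show ?thesis .
qed

lemma psi_conj:
  assumes g: "g \<in> comm_words" and z: "\<forall>m. 1 \<le> m \<and> m < k \<longrightarrow> psi m g = 0"
  shows "psi k (wconj h g) = psi k g"
proof -
  define a where "a = dxw h"
  define b where "b = dyw h"
  let ?E = "edges_from g (0,0)"
  have sh: "alpha (wconj h g) (eshift a b e) = alpha g e" for e
    using alpha_conj[OF g] a_def b_def by simp
  have inv: "eshift a b (eshift (-a) (-b) e) = e" for e by (cases e) (simp add: eshift_def)
  have supp: "e \<in> eshift a b ` ?E" if "alpha (wconj h g) e \<noteq> 0" for e
  proof -
    have "alpha g (eshift (-a) (-b) e) \<noteq> 0" using that sh[of "eshift (-a) (-b) e"] inv by simp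
    then have "eshift (-a) (-b) e \<in> ?E" by (rule alpha_supp)
    then show ?thesis using inv[of e] by (metis image_eqI)
  qed
  have injs: "inj_on (eshift a b) ?E" by (auto simp: inj_on_def eshift_inj)
  have "psi k (wconj h g) = (\<Sum>e\<in>eshift a b ` ?E. yterm k (alpha (wconj h g)) e)"
    by (rule psi_T) (use edges_finite supp in auto)
  also have "\<dots> = (\<Sum>e\<in>?E. yterm k (alpha (wconj h g)) (eshift a b e))"
    by (simp add: sum.reindex[OF injs])
  also have "\<dots> = (\<Sum>e\<in>?E. \<Sum>m\<in>{0..k}. yterm m (alpha g) e * (of_int a gchoose (k - m)))"
  proof (intro sum.cong refl)
    fix e
    show "yterm k (alpha (wconj h g)) (eshift a b e) = (\<Sum>m\<in>{0..k}. yterm m (alpha g) e * (of_int a gchoose (k - m)))"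
      using gbinomial_Vandermonde[of "of_int (fst (snd e)) :: real" "of_int a" k]
      by (simp add: yterm_def sh mult.assoc flip: sum_distrib_left)
  qed
  also have "\<dots> = (\<Sum>m\<in>{0..k}. psi m g * (of_int a gchoose (k - m)))"
    by (subst sum.swap) (simp add: psi_edges sum_distrib_right)
  also have "\<dots> = psi k g"
  proof -
    have zero: "psi m g = 0" if "m < k" for m
    proof (cases "m = 0")
      case True
      have "psi 0 g = (\<Sum>e\<in>?E. of_int (if fst e = Gy then chain_from g (0,0) e else 0))"
        unfolding psi_edges True by (intro sum.cong refl) (simp add: yterm_def alpha_def)
      also have "\<dots> = of_int (dyw g)"
        by (subst of_int_sum[symmetric], subst chain_sum_y) (auto simp: edges_finite)
      also have "\<dots> = 0" using comm_closed[OF g] by simp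
      finally show ?thesis using True by simp
    next
      case False
      then show ?thesis using z that by auto
    qed
    have "{0..k} = insert k {0..<k}" by auto
    then show ?thesis using zero by simp
  qed
  finally show ?thesis .
qed

lemma G_set_iff: "g \<in> G_set n \<longleftrightarrow> g \<in> comm_words \<and> (\<forall>m. 1 \<le> m \<and> m \<le> n \<longrightarrow> phi m g = 0)"
  by (induction n) (auto simp: le_Suc_eq)

lemma H_set_iff: "g \<in> H_set n \<longleftrightarrow> g \<in> comm_words \<and> (\<forall>m. 1 \<le> m \<and> m \<le> n \<longrightarrow> psi m g = 0)"
  by (induction n) (auto simp: le_Suc_eq)

theorem lemma3p3:
  fixes k :: nat
  assumes "k \<ge> 1"
  shows "(\<forall>g \<in> G_set (k - 1). \<forall>h. phi k (wconj h g) = phi k g \<and> wconj h g \<in> G_set (k - 1))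
       \<and> (\<forall>g \<in> H_set (k - 1). \<forall>h. psi k (wconj h g) = psi k g \<and> wconj h g \<in> H_set (k - 1))"
proof (intro conjI ballI allI)
  fix g h assume g: "g \<in> G_set (k - 1)"
  then have cw: "g \<in> comm_words" and z: "\<forall>m. 1 \<le> m \<and> m \<le> k - 1 \<longrightarrow> phi m g = 0"
    by (auto simp: G_set_iff)
  show "phi k (wconj h g) = phi k g"
    by (rule phi_conj[OF cw]) (use z in auto)
  have "phi m (wconj h g) = 0" if "1 \<le> m" "m \<le> k - 1" for m
  proof -
    have "phi m (wconj h g) = phi m g" by (rule phi_conj[OF cw]) (use z that in auto)
    then show ?thesis using z that by auto
  qed
  then show "wconj h g \<in> G_set (k - 1)" by (auto simp: G_set_iff conj_comm cw)
next
  fix g h assume g: "g \<in> H_set (k - 1)"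
  then have cw: "g \<in> comm_words" and z: "\<forall>m. 1 \<le> m \<and> m \<le> k - 1 \<longrightarrow> psi m g = 0"
    by (auto simp: H_set_iff)
  show "psi k (wconj h g) = psi k g"
    by (rule psi_conj[OF cw]) (use z in auto)
  have "psi m (wconj h g) = 0" if "1 \<le> m" "m \<le> k - 1" for m
  proof -
    have "psi m (wconj h g) = psi m g" by (rule psi_conj[OF cw]) (use z that in auto)
    then show ?thesis using z that by auto
  qed
  then show "wconj h g \<in> H_set (k - 1)" by (auto simp: H_set_iff conj_comm cw)
qed


end
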